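(* Let $T$ be a c.n.u. contraction on $H$ and let $(H_+,H_-,\Gamma_+,\Gamma_-)$ be a boundary quadruple for $A_T^{\perp_s}$ with contractive Weyl function $B$. Suppose there is $\mathcal{C}\in\mathbb{B}(H_+,H_-)$ such that the graph of $T$ equals $\{a\in A_T^{\perp_s}:\Gamma_-a=\mathcal{C}\Gamma_+a\}$. Then for every $x\in H$, with $a=(x,Tx)\in A_T^{\perp_s}$, $$\lambda f_{\hat x}(\lambda)-f_{\widehat{Tx}}(\lambda)=(B(\lambda)-\mathcal{C})\Gamma_+a\quad(\lambda\in\mathbb{D}_+),$$ $$f_{\hat x}(\lambda)-\lambda f_{\widehat{Tx}}(\lambda)=(I-B(\bar\lambda)^*\mathcal{C})\Gamma_+a\quad(\lambda\in\mathbb{D}_-).$$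
   Context: $H$ is an infinite-dimensional separable complex Hilbert space with inner product $(\cdot,\cdot)_H$; $T\in\mathbb{B}(H)$, $\|T\|\le1$, is completely non-unitary. $\mathbb{K}=\ker(I-T^*T)$. $\mathbb{H}=H\oplus_\perp H$ with $[(x_1,x_2),(y_1,y_2)]=i(x_1,y_1)_H-i(x_2,y_2)_H$; $S^{\perp_s}=\{a:[a,b]=0\ \forall b\in S\}$; $A_T=\{(x,Tx):x\in\mathbb{K}\}$; the graph $\{(x,Tx):x\in H\}$ of $T$ lies in $A_T^{\perp_s}$. $\mathbb{D}_\pm$ are two copies of the open unit disc; for $\lambda\in\mathbb{D}_\pm$, $\bar\lambda$ is regarded as a point of $\mathbb{D}_\mp$. $N_\lambda=\{(x,\lambda x)\}\cap A_T^{\perp_s}$ ($\lambda\in\mathbb{D}_+$), $N_\lambda=\{(\lambda x,x)\}\cap A_T^{\perp_s}$ ($\lambda\in\mathbb{D}_-$). Boundary quadruple: Hilbert spaces $H_\pm$, linear $\Gamma_\pm:A_T^{\perp_s}\to H_\pm$ with $(\Gamma_+,\Gamma_-)$ bounded, onto $H_+\oplus_\perp H_-$, kernel $A_T$, and $[a,b]=i(\Gamma_+a,\Gamma_+b)-i(\Gamma_-a,\Gamma_-b)$. Contractive Weyl function $B$: for $\lambda\in\mathbb{D}_+$, $\Gamma_+|_{N_\lambda}$ bijective onto $H_+$, $\Gamma_-a=B(\lambda)\Gamma_+a$ on $N_\lambda$; for $\lambda\in\mathbb{D}_-$, $\Gamma_-|_{N_\lambda}$ bijective onto $H_-$, $\Gamma_+a=B(\bar\lambda)^*\Gamma_-a$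 on $N_\lambda$. $\gamma_+(\lambda)z\in N_\lambda$ with $\Gamma_+\gamma_+(\lambda)z=z$ ($\lambda\in\mathbb{D}_+$); $\gamma_-(\lambda)z\in N_\lambda$ with $\Gamma_-\gamma_-(\lambda)z=z$ ($\lambda\in\mathbb{D}_-$); $\varphi_+=pr_1\circ\gamma_+$, $\varphi_-=pr_2\circ\gamma_-$. $E_\lambda=pr_1(N_\lambda)$ or $pr_2(N_\lambda)$ for $\lambda\in\mathbb{D}_+$ or $\mathbb{D}_-$; $F^\dagger_\lambda=E_{\bar\lambda}$, $F_\lambda$ its conjugate-linear dual, pairing $((\cdot,\cdot))$. For $x\in H$, $\hat x(\lambda)\in F_\lambda$ is $\omega\mapsto(x,\omega)_H$. For $\lambda\in\mathbb{D}_+$, $(\varphi_-^\dagger(\lambda)\omega,z)_{H_-}=((\omega,\varphi_-(\bar\lambda)z))$; for $\lambda\in\mathbb{D}_-$, $(\varphi_+^\dagger(\lambda)\omega,z)_{H_+}=((\omega,\varphi_+(\bar\lambda)z))$; $f_s(\lambda)=\varphi_-^\dagger(\lambda)s(\lambda)$ on $\mathbb{D}_+$ and $\varphi_+^\dagger(\lambda)s(\lambda)$ on $\mathbb{D}_-$. *)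

theory Defs
  imports "HOL-Analysis.Analysis"
begin

class cvec = real_vector +
  fixes scaleC :: "complex \<Rightarrow> 'a \<Rightarrow> 'a" (infixr "*\<^sub>C" 75)
  assumes scaleC_add_right: "a *\<^sub>C (x + y) = a *\<^sub>C x + a *\<^sub>C y"
    and scaleC_add_left: "(a + b) *\<^sub>C x = a *\<^sub>C x + b *\<^sub>C x"
    and scaleC_scaleC: "a *\<^sub>C (b *\<^sub>C x) = (a * b) *\<^sub>C x"
    and scaleC_one: "1 *\<^sub>C x = x"
    and scaleR_scaleC: "scaleR r x = complex_of_real r *\<^sub>C x"

class cinner_space = cvec + real_normed_vector +
  fixes cinner :: "'a \<Rightarrow> 'a \<Rightarrow> complex"
  assumes cinner_conj: "cinner x y = cnj (cinner y x)"
    and cinner_add_left: "cinner (x + y) z = cinner x z + cinner y z"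
    and cinner_scaleC_left: "cinner (c *\<^sub>C x) y = c * cinner x y"
    and cinner_self_norm: "cinner x x = complex_of_real ((norm x)\<^sup>2)"

class chilbert = cinner_space + complete_space

definition clinear_map :: "('a::cvec \<Rightarrow> 'b::cvec) \<Rightarrow> bool" where
  "clinear_map f \<longleftrightarrow> (\<forall>x y. f (x + y) = f x + f y) \<and> (\<forall>c x. f (c *\<^sub>C x) = c *\<^sub>C f x)"

definition cbounded :: "('a::cinner_space \<Rightarrow> 'b::cinner_space) \<Rightarrow> bool" where
  "cbounded f \<longleftrightarrow> clinear_map f \<and> (\<exists>K. \<forall>x. norm (f x) \<le> K * norm x)"

definition cadjoint :: "('a::cinner_space \<Rightarrow> 'b::cinner_space) \<Rightarrow> 'b \<Rightarrow> 'a" where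
  "cadjoint f = (THE g. \<forall>x y. cinner (f x) y = cinner x (g y))"

definition separable_space :: "'a::cinner_space itself \<Rightarrow> bool" where
  "separable_space _ \<longleftrightarrow> (\<exists>D::'a set. countable D \<and> closure D = UNIV)"

definition infinite_dim :: "'a::cinner_space itself \<Rightarrow> bool" where
  "infinite_dim _ \<longleftrightarrow> \<not> (\<exists>S::'a set. finite S \<and> (\<forall>x. \<exists>c. x = (\<Sum>s\<in>S. c s *\<^sub>C s)))"

definition closed_csubspace :: "'a::cinner_space set \<Rightarrow> bool" where
  "closed_csubspace M \<longleftrightarrow> closed M \<and> 0 \<in> M \<and> (\<forall>x\<in>M. \<forall>y\<in>M. x + y \<in> M)
     \<and> (\<forall>c. \<forall>x\<in>M. c *\<^sub>C x \<in> M)"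

definition cnu :: "('a::cinner_space \<Rightarrow> 'a) \<Rightarrow> bool" where
  "cnu T \<longleftrightarrow> (\<forall>M. closed_csubspace M \<and> T ` M \<subseteq> M \<and> cadjoint T ` M \<subseteq> M
      \<and> (\<forall>x\<in>M. cadjoint T (T x) = x \<and> T (cadjoint T x) = x) \<longrightarrow> M = {0})"

definition contraction :: "('a::cinner_space \<Rightarrow> 'a) \<Rightarrow> bool" where
  "contraction T \<longleftrightarrow> cbounded T \<and> (\<forall>x. norm (T x) \<le> norm x)"

definition pscale :: "complex \<Rightarrow> 'a::cvec \<times> 'a \<Rightarrow> 'a \<times> 'a" where
  "pscale c a = (c *\<^sub>C fst a, c *\<^sub>C snd a)"

definition kform :: "'a::cinner_space \<times> 'a \<Rightarrow> 'a \<times> 'a \<Rightarrow> complex" where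
  "kform a b = \<i> * cinner (fst a) (fst b) - \<i> * cinner (snd a) (snd b)"

definition sorth :: "('a::cinner_space \<times> 'a) set \<Rightarrow> ('a \<times> 'a) set" where
  "sorth S = {a. \<forall>b\<in>S. kform a b = 0}"

definition KK :: "('a::cinner_space \<Rightarrow> 'a) \<Rightarrow> 'a set" where
  "KK T = {x. x - cadjoint T (T x) = 0}"

definition A_T :: "('a::cinner_space \<Rightarrow> 'a) \<Rightarrow> ('a \<times> 'a) set" where
  "A_T T = {(x, T x) | x. x \<in> KK T}"

definition graph_op :: "('a \<Rightarrow> 'a) \<Rightarrow> ('a \<times> 'a) set" where
  "graph_op T = {(x, T x) | x. True}"

text \<open>Defect subspaces: \<open>N_plus T \<lambda>\<close> for \<open>\<lambda> \<in> \<DD>\<^sub>+\<close>, \<open>N_minus T \<lambda>\<close> for \<open>\<lambda> \<in> \<DD>\<^sub>-\<close>.\<close>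
definition N_plus :: "('a::cinner_space \<Rightarrow> 'a) \<Rightarrow> complex \<Rightarrow> ('a \<times> 'a) set" where
  "N_plus T l = {(x, l *\<^sub>C x) | x. True} \<inter> sorth (A_T T)"

definition N_minus :: "('a::cinner_space \<Rightarrow> 'a) \<Rightarrow> complex \<Rightarrow> ('a \<times> 'a) set" where
  "N_minus T l = {(l *\<^sub>C x, x) | x. True} \<inter> sorth (A_T T)"

definition boundary_quadruple ::
  "('a::chilbert \<Rightarrow> 'a) \<Rightarrow> ('a \<times> 'a \<Rightarrow> 'p::chilbert) \<Rightarrow> ('a \<times> 'a \<Rightarrow> 'm::chilbert) \<Rightarrow> bool" where
  "boundary_quadruple T Gp Gm \<longleftrightarrow>
     (let A = sorth (A_T T) in
      (\<forall>a\<in>A. \<forall>b\<in>A. Gp (a + b) = Gp a + Gp b \<and> Gm (a + b) = Gm a + Gm b)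
    \<and> (\<forall>c. \<forall>a\<in>A. Gp (pscale c a) = c *\<^sub>C Gp a \<and> Gm (pscale c a) = c *\<^sub>C Gm a)
    \<and> (\<exists>K. \<forall>a\<in>A. (norm (Gp a))\<^sup>2 + (norm (Gm a))\<^sup>2 \<le> K * ((norm (fst a))\<^sup>2 + (norm (snd a))\<^sup>2))
    \<and> (\<forall>p m. \<exists>a\<in>A. Gp a = p \<and> Gm a = m)
    \<and> {a\<in>A. Gp a = 0 \<and> Gm a = 0} = A_T T
    \<and> (\<forall>a\<in>A. \<forall>b\<in>A. kform a b = \<i> * cinner (Gp a) (Gp b) - \<i> * cinner (Gm a) (Gm b)))"

text \<open>Contractive Weyl function; \<open>\<lambda>\<close> ranges over the open unit disc,
  the copy \<open>\<DD>\<^sub>+\<close> or \<open>\<DD>\<^sub>-\<close> being indicated by which clause is used.\<close>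
definition weyl_function ::
  "('a::chilbert \<Rightarrow> 'a) \<Rightarrow> ('a \<times> 'a \<Rightarrow> 'p::chilbert) \<Rightarrow> ('a \<times> 'a \<Rightarrow> 'm::chilbert)
     \<Rightarrow> (complex \<Rightarrow> 'p \<Rightarrow> 'm) \<Rightarrow> bool" where
  "weyl_function T Gp Gm B \<longleftrightarrow>
     (\<forall>l. cmod l < 1 \<longrightarrow> bij_betw Gp (N_plus T l) UNIV
                         \<and> (\<forall>a\<in>N_plus T l. Gm a = B l (Gp a)))
   \<and> (\<forall>l. cmod l < 1 \<longrightarrow> bij_betw Gm (N_minus T l) UNIV
                         \<and> (\<forall>a\<in>N_minus T l. Gp a = cadjoint (B (cnj l)) (Gm a)))"

definition gamma_plus :: "('a::chilbert \<Rightarrow> 'a) \<Rightarrow> ('a \<times> 'a \<Rightarrow> 'p::chilbert) \<Rightarrow> complex \<Rightarrow> 'p \<Rightarrow> 'a \<times> 'a" where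
  "gamma_plus T Gp l z = (THE a. a \<in> N_plus T l \<and> Gp a = z)"

definition gamma_minus :: "('a::chilbert \<Rightarrow> 'a) \<Rightarrow> ('a \<times> 'a \<Rightarrow> 'm::chilbert) \<Rightarrow> complex \<Rightarrow> 'm \<Rightarrow> 'a \<times> 'a" where
  "gamma_minus T Gm l z = (THE a. a \<in> N_minus T l \<and> Gm a = z)"

definition phi_plus where "phi_plus T Gp l z = fst (gamma_plus T Gp l z)"
definition phi_minus where "phi_minus T Gm l z = snd (gamma_minus T Gm l z)"

text \<open>A section s assigns to \<open>\<lambda>\<close> a functional \<open>s \<lambda> \<in> F\<^sub>\<lambda>\<close> on \<open>E\<^sub>\<bar>\<lambda>\<close>;
  the pairing \<open>((\<omega>, e))\<close> is evaluation \<open>\<omega> e\<close>.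
  \<open>f_plus\<close>: \<open>f\<^sub>s(\<lambda>) = \<phi>\<^sub>-\<^sup>\<dagger>(\<lambda>) s(\<lambda>)\<close> on \<open>\<DD>\<^sub>+\<close>;  \<open>f_minus\<close>: \<open>\<phi>\<^sub>+\<^sup>\<dagger>(\<lambda>) s(\<lambda>)\<close> on \<open>\<DD>\<^sub>-\<close>.\<close>
definition f_plus :: "('a::chilbert \<Rightarrow> 'a) \<Rightarrow> ('a \<times> 'a \<Rightarrow> 'm::chilbert)
    \<Rightarrow> (complex \<Rightarrow> 'a \<Rightarrow> complex) \<Rightarrow> complex \<Rightarrow> 'm" where
  "f_plus T Gm s l = (THE v. \<forall>z. cinner v z = s l (phi_minus T Gm (cnj l) z))"

definition f_minus :: "('a::chilbert \<Rightarrow> 'a) \<Rightarrow> ('a \<times> 'a \<Rightarrow> 'p::chilbert)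
    \<Rightarrow> (complex \<Rightarrow> 'a \<Rightarrow> complex) \<Rightarrow> complex \<Rightarrow> 'p" where
  "f_minus T Gp s l = (THE v. \<forall>z. cinner v z = s l (phi_plus T Gp (cnj l) z))"

definition xhat :: "'a::cinner_space \<Rightarrow> complex \<Rightarrow> 'a \<Rightarrow> complex" where
  "xhat x l \<omega> = cinner x \<omega>"

end

theory Submission
  imports Defs
begin


lemma cinner_zero_left[simp]: "cinner (0::'a::cinner_space) y = 0"
  using cinner_add_left[of "0::'a" 0 y] by simp

lemma cinner_minus_left[simp]: "cinner (- x::'a::cinner_space) y = - cinner x y"
proof -
  have "cinner x y + cinner (- x) y = 0" using cinner_add_left[of x "-x" y] by simp
  then show ?thesis by (simp add: add_eq_0_iff)
qed

lemma cinner_diff_left: "cinner (x - y::'a::cinner_space) z = cinner x z - cinner y z"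
  using cinner_add_left[of x "-y" z] by simp

lemma cinner_add_right: "cinner (z::'a::cinner_space) (x + y) = cinner z x + cinner z y"
  apply (subst (1 2 3) cinner_conj) by (simp only: cinner_add_left complex_cnj_add)

lemma cinner_zero_right[simp]: "cinner (y::'a::cinner_space) 0 = 0"
  by (subst cinner_conj) simp

lemma cinner_minus_right[simp]: "cinner (y::'a::cinner_space) (- x) = - cinner y x"
  apply (subst (1 2) cinner_conj) by simp

lemma cinner_diff_right: "cinner (z::'a::cinner_space) (x - y) = cinner z x - cinner z y"
  apply (subst (1 2 3) cinner_conj) by (simp add: cinner_diff_left)

lemma cinner_scaleC_right: "cinner (x::'a::cinner_space) (c *\<^sub>C y) = cnj c * cinner x y"
  apply (subst (1 2) cinner_conj) by (simp add: cinner_scaleC_left)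

lemma cinner_scaleR_left: "cinner (scaleR r x::'a::cinner_space) y = complex_of_real r * cinner x y"
  by (simp add: scaleR_scaleC cinner_scaleC_left)

lemma cinner_scaleR_right: "cinner (x::'a::cinner_space) (scaleR r y) = complex_of_real r * cinner x y"
  by (simp add: scaleR_scaleC cinner_scaleC_right)

lemma scaleC_zero_right[simp]: "c *\<^sub>C (0::'a::cvec) = 0"
  using scaleC_add_right[of c "0::'a" 0] by simp

lemma scaleC_zero_left[simp]: "0 *\<^sub>C (x::'a::cvec) = 0"
  by (metis scaleR_scaleC of_real_0 scaleR_zero_left)

lemma scaleC_minus_right: "c *\<^sub>C (- x::'a::cvec) = - (c *\<^sub>C x)"
proof -
  have "c *\<^sub>C x + c *\<^sub>C (- x) = 0" using scaleC_add_right[of c x "-x"] by simp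
  then show ?thesis by (simp add: add_eq_0_iff)
qed

lemma scaleC_diff_right: "c *\<^sub>C (x - y::'a::cvec) = c *\<^sub>C x - c *\<^sub>C y"
  using scaleC_add_right[of c x "-y"] by (simp add: scaleC_minus_right)

lemma scaleC_minus_left: "(- c) *\<^sub>C (x::'a::cvec) = - (c *\<^sub>C x)"
proof -
  have "c *\<^sub>C x + (- c) *\<^sub>C x = 0" using scaleC_add_left[of c "-c" x] by simp
  then show ?thesis by (simp add: add_eq_0_iff)
qed

lemma scaleC_diff_left: "(a - b) *\<^sub>C (x::'a::cvec) = a *\<^sub>C x - b *\<^sub>C x"
  using scaleC_add_left[of a "-b" x] by (simp add: scaleC_minus_left)

lemma cinner_eq_zero_iff[simp]: "cinner (x::'a::cinner_space) x = 0 \<longleftrightarrow> x = 0"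
  by (simp add: cinner_self_norm)



lemma cinner_ext: assumes "\<And>z. cinner a z = cinner b z" shows "a = (b::'a::cinner_space)"
proof -
  have "cinner (a - b) (a - b) = 0" by (simp add: cinner_diff_left assms)
  then show ?thesis by simp
qed

lemma cinner_mult_cnj: "c * cnj c = complex_of_real ((cmod c)\<^sup>2)"
  by (metis complex_norm_square of_real_power)

lemma norm_diff_scaleC_sq:
  fixes x y :: "'a::cinner_space" assumes "y \<noteq> 0"
  defines "t \<equiv> cinner x y / complex_of_real ((norm y)\<^sup>2)"
  shows "(norm (x - t *\<^sub>C y))\<^sup>2 = (norm x)\<^sup>2 - (cmod (cinner x y))\<^sup>2 / (norm y)\<^sup>2"
proof -
  have ny: "norm y \<noteq> 0" using assms by simp
  define g where "g = cinner x y"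
  define n where "n = complex_of_real ((norm y)\<^sup>2)"
  have n0: "n \<noteq> 0" using ny by (simp add: n_def)
  have cn: "cnj n = n" by (simp add: n_def)
  have "complex_of_real ((norm (x - t *\<^sub>C y))\<^sup>2) = cinner (x - t *\<^sub>C y) (x - t *\<^sub>C y)"
    by (simp add: cinner_self_norm)
  also have "\<dots> = cinner x x - cnj t * cinner x y - t * cinner y x + t * cnj t * cinner y y"
    by (simp add: cinner_diff_left cinner_diff_right cinner_scaleC_left cinner_scaleC_right algebra_simps)
  also have "\<dots> = cinner x x - g * cnj g / n"
  proof -
    have "cinner y x = cnj g" unfolding g_def by (rule cinner_conj)
    moreover have "cinner y y = n" by (simp add: n_def cinner_self_norm)
    moreover have "t = g / n" by (simp add: t_def g_def n_def)
    moreover have "cnj t = cnj g / n" using cn by (simp add: t_def g_def n_def)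
    ultimately show ?thesis using n0 unfolding g_def[symmetric] by (simp add: field_simps power2_eq_square)
  qed
  also have "\<dots> = complex_of_real ((norm x)\<^sup>2 - (cmod (cinner x y))\<^sup>2 / (norm y)\<^sup>2)"
    by (simp add: cinner_self_norm cinner_mult_cnj g_def n_def)
  finally show ?thesis using of_real_eq_iff by blast
qed

lemma cauchy_schwarz: "cmod (cinner x y) \<le> norm x * norm (y::'a::cinner_space)"
proof (cases "y = 0")
  case True then show ?thesis by simp
next
  case False
  have "0 \<le> (norm x)\<^sup>2 - (cmod (cinner x y))\<^sup>2 / (norm y)\<^sup>2"
    using norm_diff_scaleC_sq[OF False, of x] by (metis zero_le_power2)
  then have "(cmod (cinner x y))\<^sup>2 / (norm y)\<^sup>2 \<le> (norm x)\<^sup>2" by simp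
  then have "(cmod (cinner x y))\<^sup>2 \<le> (norm x)\<^sup>2 * (norm y)\<^sup>2" using False
    by (simp add: divide_le_eq)
  then have "(cmod (cinner x y))\<^sup>2 \<le> (norm x * norm y)\<^sup>2" by (simp add: power_mult_distrib)
  then show ?thesis by (simp add: power2_le_iff_abs_le)
qed



lemma parallelogram:
  fixes a b :: "'a::cinner_space"
  shows "(norm (a + b))\<^sup>2 + (norm (a - b))\<^sup>2 = 2 * (norm a)\<^sup>2 + 2 * (norm b)\<^sup>2"
proof -
  have "complex_of_real ((norm (a + b))\<^sup>2 + (norm (a - b))\<^sup>2) = cinner (a+b) (a+b) + cinner (a-b) (a-b)"
    by (simp add: cinner_self_norm)
  also have "\<dots> = 2 * cinner a a + 2 * cinner b b"
    by (simp add: cinner_add_left cinner_add_right cinner_diff_left cinner_diff_right)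
  also have "\<dots> = complex_of_real (2 * (norm a)\<^sup>2 + 2 * (norm b)\<^sup>2)"
    by (simp add: cinner_self_norm)
  finally show ?thesis using of_real_eq_iff by blast
qed

lemma riesz:
  fixes f :: "'a::chilbert \<Rightarrow> complex"
  assumes fadd: "\<And>x y. f (x + y) = f x + f y"
    and fsc: "\<And>c x. f (c *\<^sub>C x) = c * f x"
    and fbd: "\<And>x. cmod (f x) \<le> K * norm x"
  shows "\<exists>w. \<forall>x. f x = cinner x w"
proof (cases "\<forall>x. f x = 0")
  case True then show ?thesis by (intro exI[of _ 0]) simp
next
  case False
  have f0: "f 0 = 0" using fadd[of 0 0] by simp
  have fminus: "f (- x) = - f x" for x using fadd[of x "-x"] f0 by (simp add: add_eq_0_iff)
  have fdiff: "f (x - y) = f x - f y" for x y using fadd[of x "-y"] fminus[of y] by simp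
  have fscR: "f (r *\<^sub>R x) = complex_of_real r * f x" for r x by (simp add: scaleR_scaleC fsc)
  from False obtain u0 where u0: "f u0 \<noteq> 0" by blast
  define u where "u = (1 / f u0) *\<^sub>C u0"
  have fu: "f u = 1" using u0 by (simp add: u_def fsc)
  define N where "N = {n. f n = 0}"
  define D where "D = (\<lambda>n. (norm (u - n))\<^sup>2) ` N"
  define d2 where "d2 = Inf D"
  have Dne: "D \<noteq> {}" using f0 by (auto simp: D_def N_def)
  have Dbdd: "bdd_below D" unfolding D_def by (rule bdd_belowI[of _ 0]) auto
  have d2le: "d2 \<le> (norm (u - n))\<^sup>2" if "f n = 0" for n
    unfolding d2_def using that Dbdd by (intro cInf_lower) (auto simp: D_def N_def)
  have ex: "\<exists>n. f n = 0 \<and> (norm (u - n))\<^sup>2 < d2 + inverse (real (Suc k))" for k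
  proof -
    have "d2 < d2 + inverse (real (Suc k))" by simp
    then obtain y where "y \<in> D" "y < d2 + inverse (real (Suc k))"
      using cInf_less_iff[OF Dne Dbdd] unfolding d2_def by blast
    then show ?thesis by (auto simp: D_def N_def)
  qed
  then obtain s where s0: "\<And>k. f (s k) = 0"
    and sb: "\<And>k. (norm (u - s k))\<^sup>2 < d2 + inverse (real (Suc k))" by metis
  have sdist: "(norm (s j - s k))\<^sup>2 \<le> 2 * inverse (real (Suc j)) + 2 * inverse (real (Suc k))" for j k
  proof -
    define m where "m = (1/2) *\<^sub>R (s j + s k)"
    have fm: "f m = 0" by (simp add: m_def fscR fadd s0)
    have e1: "(u - s j) + (u - s k) = 2 *\<^sub>R (u - m)"
      by (simp add: m_def algebra_simps scaleR_2)
    have e2: "(u - s j) - (u - s k) = s k - s j" by simp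
    have "(norm ((u - s j) + (u - s k)))\<^sup>2 = 4 * (norm (u - m))\<^sup>2"
      unfolding e1 by (simp add: power_mult_distrib)
    also have "\<dots> \<ge> 4 * d2" using d2le[OF fm] by simp
    finally have "4 * d2 \<le> (norm ((u - s j) + (u - s k)))\<^sup>2" .
    moreover have "(norm ((u - s j) + (u - s k)))\<^sup>2 + (norm (s k - s j))\<^sup>2
        = 2 * (norm (u - s j))\<^sup>2 + 2 * (norm (u - s k))\<^sup>2"
      using parallelogram[of "u - s j" "u - s k"] unfolding e2 .
    moreover have "(norm (s k - s j))\<^sup>2 = (norm (s j - s k))\<^sup>2" by (simp add: norm_minus_commute)
    ultimately show ?thesis using sb[of j] sb[of k] by linarith
  qed
  have "Cauchy s"
  proof (rule CauchyI)
    fix e :: real assume e: "0 < e"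
    obtain M :: nat where M: "4 / e\<^sup>2 < real M" using reals_Archimedean2 by blast
    show "\<exists>M. \<forall>m\<ge>M. \<forall>n\<ge>M. norm (s m - s n) < e"
    proof (intro exI[of _ M] allI impI)
      fix m n assume mM: "M \<le> m" and nM: "M \<le> n"
      have im: "inverse (real (Suc m)) \<le> inverse (real (Suc M))" using mM
        by (simp add: le_imp_inverse_le)
      have in': "inverse (real (Suc n)) \<le> inverse (real (Suc M))" using nM
        by (simp add: le_imp_inverse_le)
      have "4 / e\<^sup>2 < real (Suc M)" using M by simp
      then have "4 * inverse (real (Suc M)) < e\<^sup>2" using e
        by (simp add: field_simps)
      then have "(norm (s m - s n))\<^sup>2 < e\<^sup>2" using sdist[of m n] im in' by linarith
      then show "norm (s m - s n) < e" using e by (simp add: power_less_imp_less_base)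
    qed
  qed
  then obtain p where sp: "s \<longlonglongrightarrow> p" using Cauchy_convergent_iff convergent_def by blast
  have fp: "f p = 0"
  proof -
    have "(\<lambda>k. norm (s k - p)) \<longlonglongrightarrow> 0" using sp by (simp add: LIM_zero_iff tendsto_norm_zero)
    then have L: "(\<lambda>k. K * norm (s k - p)) \<longlonglongrightarrow> 0" by (simp add: tendsto_mult_right_zero)
    have E: "eventually (\<lambda>k. norm (f (s k) - f p) \<le> K * norm (s k - p)) sequentially"
      using fbd by (simp add: fdiff[symmetric])
    have "(\<lambda>k. f (s k) - f p) \<longlonglongrightarrow> 0" by (rule Lim_null_comparison[OF E L])
    then show ?thesis using s0 by (simp add: LIMSEQ_const_iff)
  qed
  have pd: "(norm (u - p))\<^sup>2 \<le> d2"
  proof (rule LIMSEQ_le)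
    show "(\<lambda>k. (norm (u - s k))\<^sup>2) \<longlonglongrightarrow> (norm (u - p))\<^sup>2"
      by (intro tendsto_intros sp)
    show "(\<lambda>k. d2 + inverse (real (Suc k))) \<longlonglongrightarrow> d2"
      using tendsto_add[OF tendsto_const LIMSEQ_inverse_real_of_nat, of d2] by simp
    show "\<exists>N. \<forall>n\<ge>N. (norm (u - s n))\<^sup>2 \<le> d2 + inverse (real (Suc n))"
      using sb less_imp_le by blast
  qed
  define e where "e = u - p"
  have fe: "f e = 1" using fu fp by (simp add: e_def fdiff)
  have e0: "e \<noteq> 0" using fe f0 by auto
  have orth: "cinner e n = 0" if fn: "f n = 0" for n
  proof (cases "n = 0")
    case True then show ?thesis by simp
  next
    case False
    define t where "t = cinner e n / complex_of_real ((norm n)\<^sup>2)"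
    have "f (p + t *\<^sub>C n) = 0" using fp fn by (simp add: fadd fsc)
    then have "d2 \<le> (norm (u - (p + t *\<^sub>C n)))\<^sup>2" by (rule d2le)
    also have "u - (p + t *\<^sub>C n) = e - t *\<^sub>C n" by (simp add: e_def)
    finally have "(norm e)\<^sup>2 \<le> (norm (e - t *\<^sub>C n))\<^sup>2" using pd unfolding e_def by linarith
    also have "\<dots> = (norm e)\<^sup>2 - (cmod (cinner e n))\<^sup>2 / (norm n)\<^sup>2"
      using norm_diff_scaleC_sq[OF False, of e] by (simp add: t_def)
    finally have "(cmod (cinner e n))\<^sup>2 / (norm n)\<^sup>2 \<le> 0" by simp
    then have "(cmod (cinner e n))\<^sup>2 \<le> 0" using False by (simp add: divide_le_0_iff)
    then show ?thesis by simp
  qed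
  define w where "w = (1 / (norm e)\<^sup>2) *\<^sub>R e"
  show ?thesis
  proof (intro exI[of _ w] allI)
    fix x
    have "f (x - f x *\<^sub>C e) = 0" by (simp add: fdiff fsc fe)
    then have "cinner e (x - f x *\<^sub>C e) = 0" by (rule orth)
    then have "cinner e x = cnj (f x) * cinner e e"
      by (simp add: cinner_diff_right cinner_scaleC_right)
    then have "cinner x e = f x * complex_of_real ((norm e)\<^sup>2)"
      by (subst cinner_conj) (simp add: cinner_self_norm)
    then show "f x = cinner x w" using e0 by (simp add: w_def cinner_scaleR_right)
  qed
qed



lemma cinner_ext_right: assumes "\<And>z. cinner z a = cinner z b" shows "a = (b::'a::cinner_space)"
proof (rule cinner_ext)
  fix z show "cinner a z = cinner b z" using assms[of z] by (metis cinner_conj)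
qed

lemma riesz_conj:
  fixes Y :: "'m::chilbert \<Rightarrow> 'h::cinner_space"
  assumes "\<And>x y. Y (x + y) = Y x + Y y" "\<And>c x. Y (c *\<^sub>C x) = c *\<^sub>C Y x"
    "\<And>z. norm (Y z) \<le> k * norm z"
  shows "\<exists>w. \<forall>z. cinner w z = cinner v (Y z)"
proof -
  have "\<exists>w. \<forall>z. cinner (Y z) v = cinner z w"
  proof (rule riesz)
    show "cinner (Y (x + y)) v = cinner (Y x) v + cinner (Y y) v" for x y
      by (simp add: assms(1) cinner_add_left)
    show "cinner (Y (c *\<^sub>C x)) v = c * cinner (Y x) v" for c x
      by (simp add: assms(2) cinner_scaleC_left)
    show "cmod (cinner (Y x) v) \<le> (k * norm v) * norm x" for x
    proof -
      have "cmod (cinner (Y x) v) \<le> norm (Y x) * norm v" by (rule cauchy_schwarz)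
      also have "\<dots> \<le> k * norm x * norm v" using assms(3)[of x] by (simp add: mult_right_mono)
      finally show ?thesis by (simp add: mult_ac)
    qed
  qed
  then obtain w where "\<forall>z. cinner (Y z) v = cinner z w" by blast
  then show ?thesis by (metis cinner_conj)
qed

lemma kform_add_left: "kform (a + b) c = kform a c + kform b (c::'a::cinner_space \<times> 'a)"
  by (simp add: kform_def cinner_add_left algebra_simps)

lemma kform_pscale_left: "kform (pscale c a) b = c * kform a (b::'a::cinner_space \<times> 'a)"
  by (simp add: kform_def pscale_def cinner_scaleC_left algebra_simps)

lemma sorth_add: "a \<in> sorth S \<Longrightarrow> b \<in> sorth S \<Longrightarrow> a + b \<in> sorth S"
  by (simp add: sorth_def kform_add_left)

lemma sorth_pscale: "a \<in> sorth S \<Longrightarrow> pscale c a \<in> sorth S"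
  by (simp add: sorth_def kform_pscale_left)

lemma N_minus_add: "a \<in> N_minus T m \<Longrightarrow> b \<in> N_minus T m \<Longrightarrow> a + b \<in> N_minus T m"
  unfolding N_minus_def by (auto intro!: sorth_add simp: scaleC_add_right)

lemma N_minus_pscale: assumes "a \<in> N_minus T m" shows "pscale c a \<in> N_minus T m"
proof -
  from assms obtain y where a: "a = (m *\<^sub>C y, y)" and s: "a \<in> sorth (A_T T)" unfolding N_minus_def by auto
  have "pscale c a = (m *\<^sub>C (c *\<^sub>C y), c *\<^sub>C y)" by (simp add: a pscale_def scaleC_scaleC mult.commute)
  moreover have "pscale c a \<in> sorth (A_T T)" using s by (rule sorth_pscale)
  ultimately show ?thesis unfolding N_minus_def by auto
qed

lemma N_plus_add: "a \<in> N_plus T m \<Longrightarrow> b \<in> N_plus T m \<Longrightarrow> a + b \<in> N_plus T m"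
  unfolding N_plus_def by (auto intro!: sorth_add simp: scaleC_add_right)

lemma N_plus_pscale: assumes "a \<in> N_plus T m" shows "pscale c a \<in> N_plus T m"
proof -
  from assms obtain y where a: "a = (y, m *\<^sub>C y)" and s: "a \<in> sorth (A_T T)" unfolding N_plus_def by auto
  have "pscale c a = (c *\<^sub>C y, m *\<^sub>C (c *\<^sub>C y))" by (simp add: a pscale_def scaleC_scaleC mult.commute)
  moreover have "pscale c a \<in> sorth (A_T T)" using s by (rule sorth_pscale)
  ultimately show ?thesis unfolding N_plus_def by auto
qed

lemma N_minus_form: "a \<in> N_minus T m \<Longrightarrow> a = (m *\<^sub>C snd a, snd a) \<and> a \<in> sorth (A_T T)"
  unfolding N_minus_def by auto

lemma N_plus_form: "a \<in> N_plus T m \<Longrightarrow> a = (fst a, m *\<^sub>C fst a) \<and> a \<in> sorth (A_T T)"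
  unfolding N_plus_def by auto


lemma cinner_scaleC_both: "cinner (m *\<^sub>C y) (m *\<^sub>C y) = complex_of_real ((cmod m)\<^sup>2 * (norm (y::'a::cinner_space))\<^sup>2)"
proof -
  have "cinner (m *\<^sub>C y) (m *\<^sub>C y) = (m * cnj m) * cinner y y"
    by (simp add: cinner_scaleC_left cinner_scaleC_right)
  also have "\<dots> = complex_of_real ((cmod m)\<^sup>2) * complex_of_real ((norm y)\<^sup>2)"
    by (simp only: cinner_mult_cnj cinner_self_norm)
  finally show ?thesis by simp
qed

lemma bound_from_sq:
  fixes m :: complex and y z :: real
  assumes "cmod m < 1" "(1 - (cmod m)\<^sup>2) * y\<^sup>2 \<le> z\<^sup>2" "0 \<le> y" "0 \<le> z"
  shows "y \<le> sqrt (1 / (1 - (cmod m)\<^sup>2)) * z"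
proof -
  have "(cmod m)\<^sup>2 < 1\<^sup>2" by (rule power_strict_mono) (use assms(1) in auto)
  then have pos: "0 < 1 - (cmod m)\<^sup>2" by simp
  define p where "p = 1 - (cmod m)\<^sup>2"
  have pp: "0 < p" using pos by (simp add: p_def)
  have h: "p * y\<^sup>2 \<le> z\<^sup>2" using assms(2) by (simp add: p_def)
  have "y\<^sup>2 \<le> z\<^sup>2 / p" using h pp by (simp add: le_divide_eq mult.commute)
  also have "\<dots> = (sqrt (1 / p))\<^sup>2 * z\<^sup>2" using pp by simp
  also have "\<dots> = (sqrt (1 / p) * z)\<^sup>2" by (simp only: power_mult_distrib)
  finally have "y\<^sup>2 \<le> (sqrt (1 / p) * z)\<^sup>2" .
  then have "y \<le> sqrt (1 / p) * z" by (rule power2_le_imp_le) (use assms(4) pp in simp)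
  then show ?thesis by (simp add: p_def)
qed



theorem corollary4p16:
  fixes T :: "'h::chilbert \<Rightarrow> 'h"
    and Gp :: "'h \<times> 'h \<Rightarrow> 'p::chilbert"
    and Gm :: "'h \<times> 'h \<Rightarrow> 'm::chilbert"
    and B :: "complex \<Rightarrow> 'p \<Rightarrow> 'm"
    and C :: "'p \<Rightarrow> 'm"
  assumes "separable_space TYPE('h)" and "infinite_dim TYPE('h)"
    and "contraction T" and "cnu T"
    and "boundary_quadruple T Gp Gm"
    and "weyl_function T Gp Gm B"
    and "cbounded C"
    and "graph_op T = {a \<in> sorth (A_T T). Gm a = C (Gp a)}"
  shows "\<forall>x. (\<forall>l. cmod l < 1 \<longrightarrow>
              l *\<^sub>C f_plus T Gm (xhat x) l - f_plus T Gm (xhat (T x)) l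
                = B l (Gp (x, T x)) - C (Gp (x, T x)))
           \<and> (\<forall>l. cmod l < 1 \<longrightarrow>
              f_minus T Gp (xhat x) l - l *\<^sub>C f_minus T Gp (xhat (T x)) l
                = Gp (x, T x) - cadjoint (B (cnj l)) (C (Gp (x, T x))))"
proof -
  define A where "A = sorth (A_T T)"
  have bq: "(\<forall>a\<in>A. \<forall>b\<in>A. Gp (a + b) = Gp a + Gp b \<and> Gm (a + b) = Gm a + Gm b)
    \<and> (\<forall>c. \<forall>a\<in>A. Gp (pscale c a) = c *\<^sub>C Gp a \<and> Gm (pscale c a) = c *\<^sub>C Gm a)
    \<and> (\<forall>a\<in>A. \<forall>b\<in>A. kform a b = \<i> * cinner (Gp a) (Gp b) - \<i> * cinner (Gm a) (Gm b))"
    using assms(5) unfolding boundary_quadruple_def Let_def A_def by blast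
  have ladd: "Gp (a + b) = Gp a + Gp b" "Gm (a + b) = Gm a + Gm b" if "a \<in> A" "b \<in> A" for a b
    using bq that by blast+
  have lsc: "Gp (pscale c a) = c *\<^sub>C Gp a" "Gm (pscale c a) = c *\<^sub>C Gm a" if "a \<in> A" for a c
    using bq that by blast+
  have kid: "kform a b = \<i> * cinner (Gp a) (Gp b) - \<i> * cinner (Gm a) (Gm b)" if "a \<in> A" "b \<in> A" for a b
    using bq that by blast
  have wp: "bij_betw Gp (N_plus T l) UNIV" "\<forall>a\<in>N_plus T l. Gm a = B l (Gp a)" if "cmod l < 1" for l
    using assms(6) that unfolding weyl_function_def by blast+
  have wm: "bij_betw Gm (N_minus T l) UNIV" "\<forall>a\<in>N_minus T l. Gp a = cadjoint (B (cnj l)) (Gm a)"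
    if "cmod l < 1" for l
    using assms(6) that unfolding weyl_function_def by blast+
  have NmA: "a \<in> A" if "a \<in> N_minus T m" for a m using that N_minus_form A_def by blast
  have NpA: "a \<in> A" if "a \<in> N_plus T m" for a m using that N_plus_form A_def by blast

  have gm: "gamma_minus T Gm m z \<in> N_minus T m \<and> Gm (gamma_minus T Gm m z) = z" if m: "cmod m < 1" for m z
  proof -
    have "\<exists>!a. a \<in> N_minus T m \<and> Gm a = z"
    proof -
      from wm(1)[OF m] have "z \<in> Gm ` N_minus T m" unfolding bij_betw_def by blast
      moreover have "inj_on Gm (N_minus T m)" using wm(1)[OF m] unfolding bij_betw_def by blast
      ultimately show ?thesis unfolding inj_on_def by blast
    qed
    then show ?thesis unfolding gamma_minus_def by (rule theI')
  qed
  have gm_uniq: "gamma_minus T Gm m (Gm a) = a" if m: "cmod m < 1" and a: "a \<in> N_minus T m" for m a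
  proof -
    have "inj_on Gm (N_minus T m)" using wm(1)[OF m] unfolding bij_betw_def by blast
    then show ?thesis using gm[OF m, of "Gm a"] a unfolding inj_on_def by blast
  qed
  have gp: "gamma_plus T Gp m z \<in> N_plus T m \<and> Gp (gamma_plus T Gp m z) = z" if m: "cmod m < 1" for m z
  proof -
    have "\<exists>!a. a \<in> N_plus T m \<and> Gp a = z"
    proof -
      from wp(1)[OF m] have "z \<in> Gp ` N_plus T m" unfolding bij_betw_def by blast
      moreover have "inj_on Gp (N_plus T m)" using wp(1)[OF m] unfolding bij_betw_def by blast
      ultimately show ?thesis unfolding inj_on_def by blast
    qed
    then show ?thesis unfolding gamma_plus_def by (rule theI')
  qed
  have gp_uniq: "gamma_plus T Gp m (Gp a) = a" if m: "cmod m < 1" and a: "a \<in> N_plus T m" for m a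
  proof -
    have "inj_on Gp (N_plus T m)" using wp(1)[OF m] unfolding bij_betw_def by blast
    then show ?thesis using gp[OF m, of "Gp a"] a unfolding inj_on_def by blast
  qed

  have gm_add: "gamma_minus T Gm m (z1 + z2) = gamma_minus T Gm m z1 + gamma_minus T Gm m z2"
    if m: "cmod m < 1" for m z1 z2
  proof -
    let ?s = "gamma_minus T Gm m z1 + gamma_minus T Gm m z2"
    have s: "?s \<in> N_minus T m" using gm[OF m] N_minus_add by blast
    have "Gm ?s = z1 + z2" using gm[OF m] ladd NmA by metis
    then show ?thesis using gm_uniq[OF m s] by simp
  qed
  have gm_sc: "gamma_minus T Gm m (c *\<^sub>C z) = pscale c (gamma_minus T Gm m z)"
    if m: "cmod m < 1" for m c z
  proof -
    let ?s = "pscale c (gamma_minus T Gm m z)"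
    have s: "?s \<in> N_minus T m" using gm[OF m] N_minus_pscale by blast
    have "Gm ?s = c *\<^sub>C z" using gm[OF m] lsc NmA by metis
    then show ?thesis using gm_uniq[OF m s] by simp
  qed
  have gp_add: "gamma_plus T Gp m (z1 + z2) = gamma_plus T Gp m z1 + gamma_plus T Gp m z2"
    if m: "cmod m < 1" for m z1 z2
  proof -
    let ?s = "gamma_plus T Gp m z1 + gamma_plus T Gp m z2"
    have s: "?s \<in> N_plus T m" using gp[OF m] N_plus_add by blast
    have "Gp ?s = z1 + z2" using gp[OF m] ladd NpA by metis
    then show ?thesis using gp_uniq[OF m s] by simp
  qed
  have gp_sc: "gamma_plus T Gp m (c *\<^sub>C z) = pscale c (gamma_plus T Gp m z)"
    if m: "cmod m < 1" for m c z
  proof -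
    let ?s = "pscale c (gamma_plus T Gp m z)"
    have s: "?s \<in> N_plus T m" using gp[OF m] N_plus_pscale by blast
    have "Gp ?s = c *\<^sub>C z" using gp[OF m] lsc NpA by metis
    then show ?thesis using gp_uniq[OF m s] by simp
  qed

  have gm_bd: "norm (snd (gamma_minus T Gm m z)) \<le> sqrt (1 / (1 - (cmod m)\<^sup>2)) * norm z"
    if m: "cmod m < 1" for m z
  proof -
    define a where "a = gamma_minus T Gm m z"
    define y where "y = snd a"
    have aN: "a \<in> N_minus T m" and Ga: "Gm a = z" using gm[OF m] by (auto simp: a_def)
    have af: "a = (m *\<^sub>C y, y)" using N_minus_form[OF aN] by (simp add: y_def)
    have aA: "a \<in> A" using NmA[OF aN] .
    have k1: "kform a a = \<i> * complex_of_real ((cmod m)\<^sup>2 * (norm y)\<^sup>2 - (norm y)\<^sup>2)"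
      by (subst (1 2) af) (simp only: kform_def fst_conv snd_conv cinner_scaleC_both, simp add: cinner_self_norm algebra_simps)
    have k2: "kform a a = \<i> * complex_of_real ((norm (Gp a))\<^sup>2 - (norm z)\<^sup>2)"
      using kid[OF aA aA] Ga by (simp add: cinner_self_norm algebra_simps)
    have "complex_of_real ((cmod m)\<^sup>2 * (norm y)\<^sup>2 - (norm y)\<^sup>2) = complex_of_real ((norm (Gp a))\<^sup>2 - (norm z)\<^sup>2)"
      using k1 k2 by (metis mult_cancel_left complex_i_not_zero)
    then have "(cmod m)\<^sup>2 * (norm y)\<^sup>2 - (norm y)\<^sup>2 = (norm (Gp a))\<^sup>2 - (norm z)\<^sup>2" by (simp only: of_real_eq_iff)
    then have "(1 - (cmod m)\<^sup>2) * (norm y)\<^sup>2 \<le> (norm z)\<^sup>2"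
      by (simp add: algebra_simps)
    then show ?thesis using bound_from_sq[OF m] by (simp add: y_def a_def)
  qed
  have gp_bd: "norm (fst (gamma_plus T Gp m z)) \<le> sqrt (1 / (1 - (cmod m)\<^sup>2)) * norm z"
    if m: "cmod m < 1" for m z
  proof -
    define a where "a = gamma_plus T Gp m z"
    define y where "y = fst a"
    have aN: "a \<in> N_plus T m" and Ga: "Gp a = z" using gp[OF m] by (auto simp: a_def)
    have af: "a = (y, m *\<^sub>C y)" using N_plus_form[OF aN] by (simp add: y_def)
    have aA: "a \<in> A" using NpA[OF aN] .
    have k1: "kform a a = \<i> * complex_of_real ((norm y)\<^sup>2 - (cmod m)\<^sup>2 * (norm y)\<^sup>2)"
      by (subst (1 2) af) (simp only: kform_def fst_conv snd_conv cinner_scaleC_both, simp add: cinner_self_norm algebra_simps)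
    have k2: "kform a a = \<i> * complex_of_real ((norm z)\<^sup>2 - (norm (Gm a))\<^sup>2)"
      using kid[OF aA aA] Ga by (simp add: cinner_self_norm algebra_simps)
    have "complex_of_real ((norm y)\<^sup>2 - (cmod m)\<^sup>2 * (norm y)\<^sup>2) = complex_of_real ((norm z)\<^sup>2 - (norm (Gm a))\<^sup>2)"
      using k1 k2 by (metis mult_cancel_left complex_i_not_zero)
    then have "(norm y)\<^sup>2 - (cmod m)\<^sup>2 * (norm y)\<^sup>2 = (norm z)\<^sup>2 - (norm (Gm a))\<^sup>2" by (simp only: of_real_eq_iff)
    then have "(1 - (cmod m)\<^sup>2) * (norm y)\<^sup>2 \<le> (norm z)\<^sup>2"
      by (simp add: algebra_simps) (use zero_le_power2[of "norm (Gm a)"] in linarith)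
    then show ?thesis using bound_from_sq[OF m] by (simp add: y_def a_def)
  qed

  have adj: "cinner (B m p) z = cinner p (cadjoint (B m) z)" if m: "cmod m < 1" for m p z
  proof -
    have cm: "cmod (cnj m) < 1" using m by simp
    define g where "g = (\<lambda>z. Gp (gamma_minus T Gm (cnj m) z))"
    have P: "\<forall>p z. cinner (B m p) z = cinner p (g z)"
    proof (intro allI)
      fix p z
      define c where "c = gamma_plus T Gp m p"
      define a where "a = gamma_minus T Gm (cnj m) z"
      have cN: "c \<in> N_plus T m" and Gpc: "Gp c = p" using gp[OF m] by (auto simp: c_def)
      have aN: "a \<in> N_minus T (cnj m)" and Gma: "Gm a = z" using gm[OF cm] by (auto simp: a_def)
      have Gmc: "Gm c = B m p" using wp(2)[OF m] cN Gpc by auto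
      have cf: "c = (fst c, m *\<^sub>C fst c)" using N_plus_form[OF cN] by blast
      have af: "a = (cnj m *\<^sub>C snd a, snd a)" using N_minus_form[OF aN] by blast
      have "kform c a = 0"
        by (subst cf, subst af) (simp add: kform_def cinner_scaleC_left cinner_scaleC_right)
      then have "\<i> * cinner p (g z) - \<i> * cinner (B m p) z = 0"
        using kid[OF NpA[OF cN] NmA[OF aN]] Gpc Gmc Gma by (simp add: g_def a_def)
      then have "\<i> * (cinner p (g z) - cinner (B m p) z) = 0" by (simp add: right_diff_distrib)
      then show "cinner (B m p) z = cinner p (g z)" by simp
    qed
    have "cadjoint (B m) = g"
      unfolding cadjoint_def
    proof (rule the_equality)
      show "\<forall>x y. cinner (B m x) y = cinner x (g y)" using P .
      fix g' assume g': "\<forall>x y. cinner (B m x) y = cinner x (g' y)"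
      show "g' = g"
      proof (rule ext, rule cinner_ext_right)
        fix y q show "cinner q (g' y) = cinner q (g y)" using P g' by metis
      qed
    qed
    then show ?thesis using P by simp
  qed

  have fplus_prop: "cinner (f_plus T Gm (xhat v) l) z = cinner v (snd (gamma_minus T Gm (cnj l) z))"
    if l: "cmod l < 1" for v l z
  proof -
    have m: "cmod (cnj l) < 1" using l by simp
    have "\<exists>w. \<forall>z. cinner w z = cinner v (snd (gamma_minus T Gm (cnj l) z))"
    proof (rule riesz_conj)
      show "snd (gamma_minus T Gm (cnj l) (x + y)) = snd (gamma_minus T Gm (cnj l) x) + snd (gamma_minus T Gm (cnj l) y)" for x y
        by (simp add: gm_add[OF m])
      show "snd (gamma_minus T Gm (cnj l) (c *\<^sub>C x)) = c *\<^sub>C snd (gamma_minus T Gm (cnj l) x)" for c x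
        by (simp add: gm_sc[OF m] pscale_def)
      show "norm (snd (gamma_minus T Gm (cnj l) z)) \<le> sqrt (1 / (1 - (cmod (cnj l))\<^sup>2)) * norm z" for z
        by (rule gm_bd[OF m])
    qed
    then obtain w where w: "\<forall>z. cinner w z = cinner v (snd (gamma_minus T Gm (cnj l) z))" by blast
    have "f_plus T Gm (xhat v) l = w"
      unfolding f_plus_def xhat_def phi_minus_def
    proof (rule the_equality)
      show "\<forall>z. cinner w z = cinner v (snd (gamma_minus T Gm (cnj l) z))" using w .
      fix v' assume "\<forall>z. cinner v' z = cinner v (snd (gamma_minus T Gm (cnj l) z))"
      then show "v' = w" using w by (intro cinner_ext) simp
    qed
    then show ?thesis using w by simp
  qed

  have fminus_prop: "cinner (f_minus T Gp (xhat v) l) z = cinner v (fst (gamma_plus T Gp (cnj l) z))"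
    if l: "cmod l < 1" for v l z
  proof -
    have m: "cmod (cnj l) < 1" using l by simp
    have "\<exists>w. \<forall>z. cinner w z = cinner v (fst (gamma_plus T Gp (cnj l) z))"
    proof (rule riesz_conj)
      show "fst (gamma_plus T Gp (cnj l) (x + y)) = fst (gamma_plus T Gp (cnj l) x) + fst (gamma_plus T Gp (cnj l) y)" for x y
        by (simp add: gp_add[OF m])
      show "fst (gamma_plus T Gp (cnj l) (c *\<^sub>C x)) = c *\<^sub>C fst (gamma_plus T Gp (cnj l) x)" for c x
        by (simp add: gp_sc[OF m] pscale_def)
      show "norm (fst (gamma_plus T Gp (cnj l) z)) \<le> sqrt (1 / (1 - (cmod (cnj l))\<^sup>2)) * norm z" for z
        by (rule gp_bd[OF m])
    qed
    then obtain w where w: "\<forall>z. cinner w z = cinner v (fst (gamma_plus T Gp (cnj l) z))" by blast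
    have "f_minus T Gp (xhat v) l = w"
      unfolding f_minus_def xhat_def phi_plus_def
    proof (rule the_equality)
      show "\<forall>z. cinner w z = cinner v (fst (gamma_plus T Gp (cnj l) z))" using w .
      fix v' assume "\<forall>z. cinner v' z = cinner v (fst (gamma_plus T Gp (cnj l) z))"
      then show "v' = w" using w by (intro cinner_ext) simp
    qed
    then show ?thesis using w by simp
  qed

  show ?thesis
  proof (intro allI conjI impI)
    fix x :: "'h" and l :: complex assume l: "cmod l < 1"
    have m: "cmod (cnj l) < 1" using l by simp
    define a0 where "a0 = (x, T x)"
    have "a0 \<in> graph_op T" by (auto simp: graph_op_def a0_def)
    then have a0A: "a0 \<in> A" and Gm0: "Gm a0 = C (Gp a0)" using assms(8) by (auto simp: A_def)
    define p0 where "p0 = Gp a0"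
    show "l *\<^sub>C f_plus T Gm (xhat x) l - f_plus T Gm (xhat (T x)) l
                = B l (Gp (x, T x)) - C (Gp (x, T x))"
    proof (rule cinner_ext)
      fix z
      define a where "a = gamma_minus T Gm (cnj l) z"
      define y where "y = snd a"
      have aN: "a \<in> N_minus T (cnj l)" and Gma: "Gm a = z" using gm[OF m] by (auto simp: a_def)
      have af: "a = (cnj l *\<^sub>C y, y)" using N_minus_form[OF aN] by (simp add: y_def)
      have Gpa: "Gp a = cadjoint (B l) z" using wm(2)[OF m] aN Gma by auto
      have L: "cinner (l *\<^sub>C f_plus T Gm (xhat x) l - f_plus T Gm (xhat (T x)) l) z
          = l * cinner x y - cinner (T x) y"
        by (simp add: cinner_diff_left cinner_scaleC_left fplus_prop[OF l] y_def a_def)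
      have k1: "kform a0 a = \<i> * (l * cinner x y - cinner (T x) y)"
        by (subst af) (simp add: kform_def a0_def cinner_scaleC_right algebra_simps)
      have k2: "kform a0 a = \<i> * (cinner (B l p0) z - cinner (C p0) z)"
        using kid[OF a0A NmA[OF aN]] Gm0 Gma Gpa adj[OF l, of p0 z]
        by (simp add: p0_def algebra_simps)
      have "l * cinner x y - cinner (T x) y = cinner (B l p0) z - cinner (C p0) z"
        using k1 k2 by simp
      then show "cinner (l *\<^sub>C f_plus T Gm (xhat x) l - f_plus T Gm (xhat (T x)) l) z
          = cinner (B l (Gp (x, T x)) - C (Gp (x, T x))) z"
        using L by (simp add: cinner_diff_left p0_def a0_def)
    qed
    show "f_minus T Gp (xhat x) l - l *\<^sub>C f_minus T Gp (xhat (T x)) l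
                = Gp (x, T x) - cadjoint (B (cnj l)) (C (Gp (x, T x)))"
    proof (rule cinner_ext)
      fix z
      define a where "a = gamma_plus T Gp (cnj l) z"
      define u where "u = fst a"
      have aN: "a \<in> N_plus T (cnj l)" and Gpa: "Gp a = z" using gp[OF m] by (auto simp: a_def)
      have af: "a = (u, cnj l *\<^sub>C u)" using N_plus_form[OF aN] by (simp add: u_def)
      have Gma: "Gm a = B (cnj l) z" using wp(2)[OF m] aN Gpa by auto
      have L: "cinner (f_minus T Gp (xhat x) l - l *\<^sub>C f_minus T Gp (xhat (T x)) l) z
          = cinner x u - l * cinner (T x) u"
        by (simp add: cinner_diff_left cinner_scaleC_left fminus_prop[OF l] u_def a_def)
      have k1: "kform a0 a = \<i> * (cinner x u - l * cinner (T x) u)"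
        by (subst af) (simp add: kform_def a0_def cinner_scaleC_right algebra_simps)
      have k2: "kform a0 a = \<i> * (cinner p0 z - cinner (C p0) (B (cnj l) z))"
        using kid[OF a0A NpA[OF aN]] Gm0 Gma Gpa
        by (simp add: p0_def algebra_simps)
      have R: "cinner (cadjoint (B (cnj l)) (C p0)) z = cinner (C p0) (B (cnj l) z)"
        using adj[OF m, of z "C p0"] by (metis cinner_conj)
      have "cinner x u - l * cinner (T x) u = cinner p0 z - cinner (C p0) (B (cnj l) z)"
        using k1 k2 by simp
      then show "cinner (f_minus T Gp (xhat x) l - l *\<^sub>C f_minus T Gp (xhat (T x)) l) z
          = cinner (Gp (x, T x) - cadjoint (B (cnj l)) (C (Gp (x, T x)))) z"
        using L R by (simp add: cinner_diff_left p0_def a0_def)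
    qed
  qed
qed

end
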